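(* Suppose there is a deterministic protocol solving Byzantine Broadcast with a value set containing $[N]$, tolerating $f$ faults, in which all honest processes decide within $T$ steps, and whose message and signature complexities are at most $mc$ and $sc$ in every execution (by relabeling, such a protocol exists with any prescribed process as broadcaster). Then for every $K\in\mathbb N$ there is a deterministic solution to the $K$-round Marker Problem tolerating $f$ faults, with $T$ steps per round and with message complexity at most $mc$ and signature complexity at most $sc$ per round.
   Context: Model. There are $N$ processes $P_1,\dots,P_N$; $[N]=\{1,\dots,N\}$. Time proceeds in discrete steps $t=0,1,2,\dots$ (synchronous network). At each step every process first receives all messages sent to it at the previous step, each together with the identity of its sender, and then may send messages to any processes; the behaviour of an honest process is given by its protocol, a deterministic function of its inputs and of all messages it has received so far. Communication is authenticated: a process $P_j$ can sign a string $m$, producing $(m)_{P_j}$; every sent message is signed by its sender; no process other than $P_j$ can produce a string containing $(m)_{P_j}$ unless it copied it from a message it received, except that corrupted processes can produce signatures of any corrupted process. An $f$-adversary knows all protocols and all inputs (including future inputs), chooses at time $0$ a set of at most $f$ processes to corrupt, and makes them behave arbitrarily subject to the signature rule; the other processes are honest and follow their protocol. $\mathcal H$ denotes the set of honest processes. A protocol tolerates $f$ faults if its required properties hold against every $f$-adversary. Message complexity = number of messages sent by honest processes; signature complexity = number of signatures contained in messages sent by honest processes, counted with multiplicity (each nested signature and each repetition counts). Byzantine Broadcast with value set $\mathcal V$ (a finite set containing $0$) and broadcaster $P_1$: at time $0$, $P_1$ receives an initial value $v_1\in\mathcal V$; each honest $P_n$ decides a value $d_n\in\mathcal V$ such that (consistency)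 all honest processes decide the same value, (validity) if $P_1$ is honest then every honest process decides $v_1$, (termination) every honest process decides in finite time. Marker Problem ($K$ rounds of $T$ steps). Time is divided into $K$ consecutive rounds of $T$ steps. At the end of each round every honest process decides either "unmarked" or "marked, with previous marked process $d$" where $d\in[N]\cup\{\perp\}$. The marked process $M$ of round $1$ is $P_1$ if $P_1\in\mathcal H$ and $\perp$ otherwise; the marked process of round $i+1$ is the honest process that decided "marked" at the end of round $i$, or $\perp$ if there is none. At the beginning of round $i$, if $M\neq\perp$, $M$ receives an input $I_i\in[N]$ ("send the marker to $P_{I_i}$"). Required at the end of every round $i$: (consistency) at most one honest process decides it is marked; (liveness) if $M\in\mathcal H$, $I_i=n$ and $P_n\in\mathcal H$, then $P_n$ decides it is marked with previous marked process $M$; (non-impersonation) if $M=\perp$ and an honest process decides it is marked with previous marked process $d$, then $d\notin\mathcal H$. The message/signature complexity per round counts messages/signatures sent by honest processes during one round. *)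

theory Defs
  imports Main
begin

text \<open>Messages are terms: atoms (arbitrary data, encoded as naturals), pairs,
and signatures Sig m j, standing for the signature of process j on m.\<close>

datatype msg = Atom nat | MPair msg msg | Sig msg nat

fun subterms :: "msg \<Rightarrow> msg set" where
  "subterms (Atom a) = {Atom a}"
| "subterms (MPair a b) = insert (MPair a b) (subterms a \<union> subterms b)"
| "subterms (Sig a k) = insert (Sig a k) (subterms a)"

fun sigcount :: "msg \<Rightarrow> nat" where
  "sigcount (Atom a) = 0"
| "sigcount (MPair a b) = sigcount a + sigcount b"
| "sigcount (Sig a k) = Suc (sigcount a)"

text \<open>Local history of a process after t steps: one record per step s < t,
consisting of the input received at step s (if any) and the list of
messages received at step s (pairs sender, payload), i.e. those sent to it
at step s-1.\<close>
type_synonym hist = "(nat option \<times> (nat \<times> msg) list) list"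

text \<open>Sending behaviour of the honest protocol: process n, given its local
history up to and including the receipt phase of the current step, sends a
list of (destination, payload) pairs.\<close>
type_synonym sendfn = "nat \<Rightarrow> hist \<Rightarrow> (nat \<times> msg) list"

type_synonym advfn = "nat \<Rightarrow> nat \<Rightarrow> (nat \<times> msg) list"

text \<open>Input oracle: given the step t, the histories of all processes after t
steps, and a process n, the input (if any) that n receives at step t.\<close>
type_synonym inpfn = "nat \<Rightarrow> (nat \<Rightarrow> hist) \<Rightarrow> nat \<Rightarrow> nat option"

definition deliver :: "nat \<Rightarrow> (nat \<Rightarrow> (nat \<times> msg) list) \<Rightarrow> nat \<Rightarrow> (nat \<times> msg) list" where
  "deliver N out n =
     concat (map (\<lambda>i. map (\<lambda>(j, m). (i, m)) (filter (\<lambda>(j, m). j = n) (out i))) [1..<Suc N])"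

text \<open>run N C sendf adv inp t = (histories after t steps, messages sent at step t-1).\<close>
fun run :: "nat \<Rightarrow> nat set \<Rightarrow> sendfn \<Rightarrow> advfn \<Rightarrow> inpfn \<Rightarrow> nat
             \<Rightarrow> (nat \<Rightarrow> hist) \<times> (nat \<Rightarrow> (nat \<times> msg) list)" where
  "run N C sendf adv inp 0 = ((\<lambda>n. []), (\<lambda>n. []))"
| "run N C sendf adv inp (Suc t) =
     (let h = fst (run N C sendf adv inp t);
          out = Product_Type.snd (run N C sendf adv inp t);
          h' = (\<lambda>n. h n @ [(inp t h n, deliver N out n)])
      in (h', (\<lambda>n. if n \<in> C then adv t n else sendf n (h' n))))"

definition hists_at :: "nat \<Rightarrow> nat set \<Rightarrow> sendfn \<Rightarrow> advfn \<Rightarrow> inpfn \<Rightarrow> nat \<Rightarrow> nat \<Rightarrow> hist" where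
  "hists_at N C sendf adv inp t = fst (run N C sendf adv inp t)"

definition sent_at :: "nat \<Rightarrow> nat set \<Rightarrow> sendfn \<Rightarrow> advfn \<Rightarrow> inpfn \<Rightarrow> nat \<Rightarrow> nat \<Rightarrow> (nat \<times> msg) list" where
  "sent_at N C sendf adv inp s = Product_Type.snd (run N C sendf adv inp (Suc s))"

definition valid_send :: "nat \<Rightarrow> sendfn \<Rightarrow> bool" where
  "valid_send N sendf \<longleftrightarrow>
     (\<forall>n \<in> {1..N}. \<forall>h. \<forall>(j, m) \<in> set (sendf n h). j \<in> {1..N} \<and>
        (\<forall>x k. Sig x k \<in> subterms m \<longrightarrow>
           k = n \<or> (\<exists>r \<in> set h. \<exists>(i, m') \<in> set (Product_Type.snd r). Sig x k \<in> subterms m')))"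

definition admissible_adv :: "nat \<Rightarrow> nat set \<Rightarrow> sendfn \<Rightarrow> advfn \<Rightarrow> inpfn \<Rightarrow> bool" where
  "admissible_adv N C sendf adv inp \<longleftrightarrow>
     (\<forall>t. \<forall>c \<in> C. \<forall>(j, m) \<in> set (adv t c). j \<in> {1..N} \<and>
        (\<forall>x k. Sig x k \<in> subterms m \<longrightarrow>
           k \<in> C \<or> (\<exists>c' \<in> C. \<exists>r \<in> set (hists_at N C sendf adv inp (Suc t) c').
                      \<exists>(i, m') \<in> set (Product_Type.snd r). Sig x k \<in> subterms m')))"

definition f_adversary :: "nat \<Rightarrow> nat \<Rightarrow> nat set \<Rightarrow> sendfn \<Rightarrow> advfn \<Rightarrow> inpfn \<Rightarrow> bool" where
  "f_adversary N f C sendf adv inp \<longleftrightarrow>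
     C \<subseteq> {1..N} \<and> card C \<le> f \<and> admissible_adv N C sendf adv inp"

definition honest :: "nat \<Rightarrow> nat set \<Rightarrow> nat set" where
  "honest N C = {1..N} - C"

definition msgs_at :: "nat \<Rightarrow> nat set \<Rightarrow> sendfn \<Rightarrow> advfn \<Rightarrow> inpfn \<Rightarrow> nat \<Rightarrow> nat" where
  "msgs_at N C sendf adv inp s = (\<Sum>n \<in> honest N C. length (sent_at N C sendf adv inp s n))"

definition sigs_at :: "nat \<Rightarrow> nat set \<Rightarrow> sendfn \<Rightarrow> advfn \<Rightarrow> inpfn \<Rightarrow> nat \<Rightarrow> nat" where
  "sigs_at N C sendf adv inp s =
     (\<Sum>n \<in> honest N C. sum_list (map (\<lambda>(j, m). sigcount m) (sent_at N C sendf adv inp s n)))"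

definition bb_input :: "nat \<Rightarrow> inpfn" where
  "bb_input v t h n = (if t = 0 \<and> n = 1 then Some v else None)"

definition solves_BB ::
  "nat \<Rightarrow> nat \<Rightarrow> nat set \<Rightarrow> nat \<Rightarrow> nat \<Rightarrow> nat \<Rightarrow> sendfn \<Rightarrow> (nat \<Rightarrow> hist \<Rightarrow> nat) \<Rightarrow> bool" where
  "solves_BB N f V T mc sc sendf dec \<longleftrightarrow>
     valid_send N sendf \<and>
     (\<forall>v \<in> V. \<forall>C adv. f_adversary N f C sendf adv (bb_input v) \<longrightarrow>
        (let H = honest N C; h = hists_at N C sendf adv (bb_input v) T in
          (\<forall>n \<in> H. dec n (h n) \<in> V) \<and>
          (\<forall>n \<in> H. \<forall>n' \<in> H. dec n (h n) = dec n' (h n')) \<and>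
          (1 \<in> H \<longrightarrow> (\<forall>n \<in> H. dec n (h n) = v)) \<and>
          (\<forall>t. (\<Sum>s<t. msgs_at N C sendf adv (bb_input v) s) \<le> mc) \<and>
          (\<forall>t. (\<Sum>s<t. sigs_at N C sendf adv (bb_input v) s) \<le> sc)))"

text \<open>Decision at the end of a round: Unmarked, or Marked d (d = None is \<bottom>).\<close>
datatype mdec = Unmarked | Marked "nat option"

text \<open>The marked process of round r, computed from the histories h at the
beginning of round r (i.e. the end of round r-1).\<close>
definition marked_proc ::
  "nat \<Rightarrow> nat set \<Rightarrow> (nat \<Rightarrow> hist \<Rightarrow> mdec) \<Rightarrow> nat \<Rightarrow> (nat \<Rightarrow> hist) \<Rightarrow> nat option" where
  "marked_proc N C dec r h =
     (if r = 1 then (if 1 \<in> honest N C then Some 1 else None)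
      else if (\<exists>!n. n \<in> honest N C \<and> dec n (h n) \<noteq> Unmarked)
           then Some (THE n. n \<in> honest N C \<and> dec n (h n) \<noteq> Unmarked)
           else None)"

text \<open>Round r (1-based) consists of steps (r-1)T, ..., rT-1; at its first step
the marked process receives I r.\<close>
definition marker_input ::
  "nat \<Rightarrow> nat set \<Rightarrow> (nat \<Rightarrow> hist \<Rightarrow> mdec) \<Rightarrow> nat \<Rightarrow> nat \<Rightarrow> (nat \<Rightarrow> nat) \<Rightarrow> inpfn" where
  "marker_input N C dec T K I t h n =
     (if 0 < T \<and> t mod T = 0 \<and> t div T < K \<and> marked_proc N C dec (t div T + 1) h = Some n
      then Some (I (t div T + 1)) else None)"

definition solves_marker ::
  "nat \<Rightarrow> nat \<Rightarrow> nat \<Rightarrow> nat \<Rightarrow> nat \<Rightarrow> nat \<Rightarrow> sendfn \<Rightarrow> (nat \<Rightarrow> hist \<Rightarrow> mdec) \<Rightarrow> bool" where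
  "solves_marker N f K T mc sc sendf dec \<longleftrightarrow>
     valid_send N sendf \<and>
     (\<forall>I C adv. (\<forall>i \<in> {1..K}. I i \<in> {1..N}) \<and>
         f_adversary N f C sendf adv (marker_input N C dec T K I) \<longrightarrow>
        (let H = honest N C; inp = marker_input N C dec T K I in
         \<forall>i \<in> {1..K}.
          (let h = hists_at N C sendf adv inp (i * T);
               M = marked_proc N C dec i (hists_at N C sendf adv inp ((i - 1) * T)) in
           (\<forall>n \<in> H. \<forall>k. dec n (h n) = Marked (Some k) \<longrightarrow> k \<in> {1..N}) \<and>
           card {n \<in> H. dec n (h n) \<noteq> Unmarked} \<le> 1 \<and>
           (\<forall>m. M = Some m \<and> I i \<in> H \<longrightarrow> dec (I i) (h (I i)) = Marked (Some m)) \<and>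
           (M = None \<longrightarrow> (\<forall>n \<in> H. \<forall>k. dec n (h n) = Marked (Some k) \<longrightarrow> k \<notin> H)) \<and>
           (\<Sum>s \<in> {(i - 1) * T..<i * T}. msgs_at N C sendf adv inp s) \<le> mc \<and>
           (\<Sum>s \<in> {(i - 1) * T..<i * T}. sigs_at N C sendf adv inp s) \<le> sc)))"

end

theory Submission
  imports Defs
begin

definition sw :: "nat \<Rightarrow> nat \<Rightarrow> nat" where
  "sw b x = (if x = 1 then b else if x = b then 1 else x)"

lemma sw_sw[simp]: "sw b (sw b x) = x"
  by (auto simp: sw_def)

lemma sw_eq_iff[simp]: "sw b x = sw b y \<longleftrightarrow> x = y"
  by (metis sw_sw)

lemma sw_1[simp]: "sw b 1 = b"
  by (simp add: sw_def)

lemma sw_range: "b \<in> {1..N} \<Longrightarrow> x \<in> {1..N} \<Longrightarrow> sw b x \<in> {1..N}"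
  by (auto simp: sw_def)

lemma inj_sw: "inj (sw b)"
  by (simp add: inj_def)

lemma sw_image: "b \<in> {1..N} \<Longrightarrow> sw b ` {1..N} = {1..N}"
proof -
  assume b: "b \<in> {1..N}"
  show ?thesis
  proof
    show "sw b ` {1..N} \<subseteq> {1..N}" using sw_range[OF b] by auto
    show "{1..N} \<subseteq> sw b ` {1..N}"
    proof
      fix x assume x: "x \<in> {1..N}"
      have "x = sw b (sw b x)" by simp
      then show "x \<in> sw b ` {1..N}" using sw_range[OF b x] by (rule image_eqI)
    qed
  qed
qed

fun wfm :: "nat \<Rightarrow> msg \<Rightarrow> bool" where
  "wfm i (Atom a) = True"
| "wfm i (MPair x y) = (wfm i x \<and> wfm i y)"
| "wfm i (Sig (MPair (Atom j) y) k) = (j = i \<and> wfm i y)"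
| "wfm i (Sig _ k) = False"

fun enc :: "nat \<Rightarrow> nat \<Rightarrow> msg \<Rightarrow> msg" where
  "enc i b (Atom a) = Atom a"
| "enc i b (MPair x y) = MPair (enc i b x) (enc i b y)"
| "enc i b (Sig x k) = Sig (MPair (Atom i) (enc i b x)) (sw b k)"

fun decd :: "nat \<Rightarrow> nat \<Rightarrow> msg \<Rightarrow> msg" where
  "decd i b (Atom a) = Atom a"
| "decd i b (MPair x y) = MPair (decd i b x) (decd i b y)"
| "decd i b (Sig (MPair (Atom j) y) k) = (if j = i \<and> wfm i y then Sig (decd i b y) (sw b k) else Atom 0)"
| "decd i b (Sig _ k) = Atom 0"

lemma wf_enc: "wfm i (enc i b m)"
  by (induction m) auto

lemma decd_enc[simp]: "decd i b (enc i b m) = m"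
  by (induction m) (auto simp: wf_enc)

lemma enc_decd: "wfm i m \<Longrightarrow> enc i b (decd i b m) = m"
  by (induction i b m rule: decd.induct) auto

lemma sigcount_enc[simp]: "sigcount (enc i b m) = sigcount m"
  by (induction m) auto

lemma subterms_enc_Sig:
  "Sig x k \<in> subterms (enc i b m) \<Longrightarrow>
   \<exists>y k'. Sig y k' \<in> subterms m \<and> x = MPair (Atom i) (enc i b y) \<and> k = sw b k'"
  by (induction m) auto

lemma subterms_decd_Sig:
  "Sig x k \<in> subterms (decd i b m) \<Longrightarrow>
   \<exists>y k'. Sig (MPair (Atom i) y) k' \<in> subterms m \<and> wfm i y \<and> x = decd i b y \<and> k = sw b k'"
  by (induction i b m rule: decd.induct) (auto split: if_splits)

lemma subterms_enc_Sig_Sig: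
  "Sig y k \<in> subterms m \<Longrightarrow> enc i b (Sig y k) \<in> subterms (enc i b m)"
  by (induction m) auto

lemma Sig_in_subterms_decd:
  "Sig (MPair (Atom i) y) k \<in> subterms (enc i b m) \<Longrightarrow>
   Sig (decd i b y) (sw b k) \<in> subterms m"
  by (induction m) (auto simp: wf_enc)



lemma run_fst: "fst (run N C sf adv inp t) n =
  map (\<lambda>r. (inp r (fst (run N C sf adv inp r)) n, deliver N (snd (run N C sf adv inp r)) n)) [0..<t]"
  by (induction t) (auto simp: Let_def)

lemma run_snd_Suc: "snd (run N C sf adv inp (Suc t)) n =
  (if n \<in> C then adv t n else sf n (fst (run N C sf adv inp (Suc t)) n))"
  by (simp add: Let_def)

lemma run_snd_0: "snd (run N C sf adv inp 0) = (\<lambda>n. [])"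
  by simp

lemma length_run[simp]: "length (fst (run N C sf adv inp t) n) = t"
  by (simp add: run_fst)

lemma take_run: "t' \<le> t \<Longrightarrow> take t' (fst (run N C sf adv inp t) n) = fst (run N C sf adv inp t') n"
  by (simp add: run_fst take_map min_def)

lemma nth_run: "r < t \<Longrightarrow> fst (run N C sf adv inp t) n ! r =
   (inp r (fst (run N C sf adv inp r)) n, deliver N (snd (run N C sf adv inp r)) n)"
  by (simp add: run_fst)

lemma run_Suc_app: "fst (run N C sf adv inp (Suc t)) n = fst (run N C sf adv inp t) n @
   [(inp t (fst (run N C sf adv inp t)) n, deliver N (snd (run N C sf adv inp t)) n)]"
  by (simp add: Let_def)

lemma set_run: "x \<in> set (fst (run N C sf adv inp t) n) \<longleftrightarrow>
   (\<exists>r<t. x = (inp r (fst (run N C sf adv inp r)) n, deliver N (snd (run N C sf adv inp r)) n))"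
  by (auto simp: run_fst)

lemma deliver_mem: "(q, m) \<in> set (deliver N out n) \<Longrightarrow> q \<in> {1..N} \<and> (n, m) \<in> set (out q)"
  by (auto simp: deliver_def)

lemma deliver_memI: "q \<in> {1..N} \<Longrightarrow> (n, m) \<in> set (out q) \<Longrightarrow> (q, m) \<in> set (deliver N out n)"
  by (force simp: deliver_def)

lemma deliver_empty[simp]: "deliver N (\<lambda>_. []) n = []"
  by (simp add: deliver_def)

definition reord :: "nat \<Rightarrow> nat \<Rightarrow> nat \<Rightarrow> (nat \<times> msg) list \<Rightarrow> (nat \<times> msg) list" where
  "reord N i b L = concat (map (\<lambda>q. map (\<lambda>(r, m). (q, decd i b m)) (filter (\<lambda>(r, m). r = sw b q) L)) [1..<Suc N])"

lemma concat_single: "distinct xs \<Longrightarrow> a \<in> set xs \<Longrightarrow> concat (map (\<lambda>i. if i = a then G else []) xs) = G"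
proof (induction xs)
  case Nil then show ?case by simp
next
  case (Cons x xs)
  show ?case
  proof (cases "x = a")
    case True
    with Cons.prems have "concat (map (\<lambda>i. if i = a then G else []) xs) = []"
      by (auto simp: concat_eq_Nil_conv)
    with True show ?thesis by simp
  next
    case False with Cons show ?thesis by simp
  qed
qed

lemma filter_deliver: "a \<in> {1..N} \<Longrightarrow> filter (\<lambda>(r, m). r = a) (deliver N out n) =
   map (\<lambda>(j, m). (a, m)) (filter (\<lambda>(j, m). j = n) (out a))"
proof -
  assume a: "a \<in> {1..N}"
  have "filter (\<lambda>(r, m). r = a) (deliver N out n) =
    concat (map (\<lambda>i. filter (\<lambda>(r, m). r = a) (map (\<lambda>(j, m). (i, m)) (filter (\<lambda>(j, m). j = n) (out i)))) [1..<Suc N])"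
    by (simp add: deliver_def filter_concat o_def)
  also have "\<dots> = concat (map (\<lambda>i. if i = a then map (\<lambda>(j, m). (a, m)) (filter (\<lambda>(j, m). j = n) (out a)) else []) [1..<Suc N])"
    by (rule arg_cong[where f=concat], rule map_cong) (auto simp: filter_map o_def split_def filter_empty_conv)
  also have "\<dots> = map (\<lambda>(j, m). (a, m)) (filter (\<lambda>(j, m). j = n) (out a))"
    using a by (intro concat_single) auto
  finally show ?thesis .
qed

lemma sw_eq_conv: "sw b x = y \<longleftrightarrow> x = sw b y"
  by auto

lemma deliver_relabel:
  assumes b: "b \<in> {1..N}"
    and out: "\<forall>q\<in>{1..N}. out' q = map (\<lambda>(j, m). (sw b j, decd i b m)) (out (sw b q))"
  shows "deliver N out' p = reord N i b (deliver N out (sw b p))"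
  unfolding deliver_def[of N out'] reord_def
proof (rule arg_cong[where f=concat], rule map_cong[OF refl])
  fix q assume q: "q \<in> set [1..<Suc N]"
  then have q': "q \<in> {1..N}" "sw b q \<in> {1..N}" using b sw_range by auto
  have "filter (\<lambda>(r, m). r = sw b q) (deliver N out (sw b p)) =
     map (\<lambda>(j, m). (sw b q, m)) (filter (\<lambda>(j, m). j = sw b p) (out (sw b q)))"
    by (rule filter_deliver[OF q'(2)])
  then show "map (\<lambda>(j, m). (q, m)) (filter (\<lambda>(j, m). j = p) (out' q)) =
    map (\<lambda>(r, m). (q, decd i b m)) (filter (\<lambda>(r, m). r = sw b q) (deliver N out (sw b p)))"
    using out q' by (auto simp: filter_map o_def split_def sw_eq_conv intro!: arg_cong2[where f=filter] ext)
qed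

lemma reord_mem: assumes "(q, m) \<in> set (deliver N out n)" "b \<in> {1..N}"
  shows "(sw b q, decd i b m) \<in> set (reord N i b (deliver N out n))"
proof -
  have q: "q \<in> {1..N}" using deliver_mem[OF assms(1)] by simp
  then have sq: "sw b q \<in> set [1..<Suc N]" using sw_range[OF assms(2) q] by auto
  define g where "g = (\<lambda>q. map (\<lambda>(r, m). (q, decd i b m)) (filter (\<lambda>(r, m). r = sw b q) (deliver N out n)))"
  have mem: "(q, m) \<in> set (filter (\<lambda>(r, m). r = sw b (sw b q)) (deliver N out n))"
    using assms(1) by simp
  have "(sw b q, decd i b m) \<in> set (g (sw b q))"
    unfolding g_def set_map using imageI[OF mem, of "\<lambda>(r, m). (sw b q, decd i b m)"] by simp
  then have "(sw b q, decd i b m) \<in> set (concat (map g [1..<Suc N]))"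
    using sq by auto
  then show ?thesis unfolding reord_def g_def .
qed

lemma reord_mem_D: "(q, m') \<in> set (reord N i b L) \<Longrightarrow> \<exists>r0 m''. (r0, m'') \<in> set L \<and> m' = decd i b m''"
  by (auto simp: reord_def)

context
  fixes N T :: nat and sendB :: sendfn and decB :: "nat \<Rightarrow> hist \<Rightarrow> nat"
begin

definition decode_rec :: "nat \<Rightarrow> nat \<Rightarrow> nat \<Rightarrow> bool \<Rightarrow> nat option \<times> (nat \<times> msg) list
    \<Rightarrow> nat option \<times> (nat \<times> msg) list" where
  "decode_rec i b n first r =
     (if first \<and> n = b then Some (case fst r of Some x \<Rightarrow> x | None \<Rightarrow> 0) else None,
      if first then [] else reord N i b (snd r))"

definition bbview :: "nat \<Rightarrow> nat \<Rightarrow> nat \<Rightarrow> hist \<Rightarrow> hist" where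
  "bbview i b n hs = map (\<lambda>j. decode_rec i b n (j = 0) (hs ! j)) [0..<length hs]"

definition window :: "nat \<Rightarrow> hist \<Rightarrow> hist" where
  "window r h = drop ((r - 1) * T) (take (r * T) h)"

fun bcast :: "nat \<Rightarrow> hist \<Rightarrow> nat \<Rightarrow> nat" where
  "bcast n h 0 = 1"
| "bcast n h (Suc r) = (if r = 0 then 1 else
     (let b = bcast n h r; w = decB (sw b n) (bbview r b n (window r h)) in
      if w \<in> {1..N} then w else 1))"

definition rdec :: "nat \<Rightarrow> hist \<Rightarrow> nat \<Rightarrow> nat" where
  "rdec n h r = decB (sw (bcast n h r) n) (bbview r (bcast n h r) n (window r h))"

definition sendM :: sendfn where
  "sendM n h = (if h = [] then [] else
     (let i = (length h - 1) div T + 1; b = bcast n h i in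
      map (\<lambda>(j, m). (sw b j, enc i b m)) (sendB (sw b n) (bbview i b n (drop ((i - 1) * T) h)))))"

definition decM :: "nat \<Rightarrow> hist \<Rightarrow> mdec" where
  "decM n h = (let r = length h div T in
     if r = 0 then Unmarked else if rdec n h r = n then Marked (Some (bcast n h r)) else Unmarked)"

lemma bcast_Suc: "0 < r \<Longrightarrow> bcast n h (Suc r) = (if rdec n h r \<in> {1..N} then rdec n h r else 1)"
  by (simp add: rdec_def Let_def)

lemma bcast_take: "bcast n h r = bcast n (take ((r - 1) * T) h) r"
proof (induction r arbitrary: h)
  case 0 then show ?case by simp
next
  case (Suc r)
  show ?case
  proof (cases "r = 0")
    case True then show ?thesis by simp
  next
    case False
    have w: "window r h = window r (take (r * T) h)"
      by (simp add: window_def)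
    have "bcast n h r = bcast n (take ((r - 1) * T) h) r" by (rule Suc.IH)
    also have "\<dots> = bcast n (take ((r - 1) * T) (take (r * T) h)) r"
      by (simp add: min_def)
    also have "\<dots> = bcast n (take (r * T) h) r" using Suc.IH[of "take (r * T) h"] by simp
    finally have "bcast n h r = bcast n (take (r * T) h) r" .
    then show ?thesis using False w by (simp add: Let_def)
  qed
qed

lemma bcast_range: "1 \<le> N \<Longrightarrow> bcast n h r \<in> {1..N}"
  by (induction r) (auto simp: Let_def)

lemma bbview_snoc: "bbview i b n (hs @ [x]) = bbview i b n hs @ [decode_rec i b n (hs = []) x]"
  by (simp add: bbview_def nth_append)

lemma bbview_Nil[simp]: "bbview i b n [] = []"
  by (simp add: bbview_def)

lemma valid_sendM:
  assumes vs: "valid_send N sendB" and N1: "1 \<le> N"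
  shows "valid_send N sendM"
  unfolding valid_send_def
proof (intro ballI allI, clarify)
  fix n h j m
  assume n: "n \<in> {1..N}" and jm: "(j, m) \<in> set (sendM n h)"
  then have hne: "h \<noteq> []" by (auto simp: sendM_def)
  define i where "i = (length h - 1) div T + 1"
  define b where "b = bcast n h i"
  define hb where "hb = bbview i b n (drop ((i - 1) * T) h)"
  have b: "b \<in> {1..N}" using bcast_range[OF N1] by (simp add: b_def)
  have sn: "sw b n \<in> {1..N}" using sw_range[OF b n] .
  from jm hne obtain j0 m0 where jm0: "(j0, m0) \<in> set (sendB (sw b n) hb)"
    and j: "j = sw b j0" and m: "m = enc i b m0"
    by (auto simp: sendM_def Let_def i_def b_def hb_def)
  have vB: "j0 \<in> {1..N} \<and> (\<forall>x k. Sig x k \<in> subterms m0 \<longrightarrow>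
           k = sw b n \<or> (\<exists>r \<in> set hb. \<exists>(i, m') \<in> set (Product_Type.snd r). Sig x k \<in> subterms m'))"
    using vs sn jm0 unfolding valid_send_def by fastforce
  show "j \<in> {1..N} \<and> (\<forall>x k. Sig x k \<in> subterms m \<longrightarrow>
           k = n \<or> (\<exists>r \<in> set h. \<exists>(i, m') \<in> set (Product_Type.snd r). Sig x k \<in> subterms m'))"
  proof (intro conjI allI impI)
    show "j \<in> {1..N}" using vB j sw_range[OF b] by auto
  next
    fix x k assume "Sig x k \<in> subterms m"
    then obtain y k' where y: "Sig y k' \<in> subterms m0" and x: "x = MPair (Atom i) (enc i b y)"
      and k: "k = sw b k'" using subterms_enc_Sig m by blast
    from vB y have "k' = sw b n \<or> (\<exists>r \<in> set hb. \<exists>(i, m') \<in> set (Product_Type.snd r). Sig y k' \<in> subterms m')"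
      by blast
    then show "k = n \<or> (\<exists>r \<in> set h. \<exists>(i, m') \<in> set (Product_Type.snd r). Sig x k \<in> subterms m')"
    proof
      assume "k' = sw b n" then show ?thesis using k by simp
    next
      assume "\<exists>r \<in> set hb. \<exists>(i, m') \<in> set (Product_Type.snd r). Sig y k' \<in> subterms m'"
      then obtain r q m' where r: "r \<in> set hb" and qm: "(q, m') \<in> set (snd r)" and sy: "Sig y k' \<in> subterms m'"
        by auto
      from r obtain jj where jj: "jj < length (drop ((i - 1) * T) h)"
        and r': "r = decode_rec i b n (jj = 0) (drop ((i - 1) * T) h ! jj)"
        by (auto simp: hb_def bbview_def)
      have inh: "drop ((i - 1) * T) h ! jj \<in> set h"
        using jj by (metis in_set_dropD nth_mem)
      from qm r' have "(q, m') \<in> set (reord N i b (snd (drop ((i - 1) * T) h ! jj)))"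
        by (auto simp: decode_rec_def split: if_splits)
      then obtain r0 m'' where rm: "(r0, m'') \<in> set (snd (drop ((i - 1) * T) h ! jj))" and m': "m' = decd i b m''"
        using reord_mem_D by blast
      from sy m' obtain y1 k1 where s1: "Sig (MPair (Atom i) y1) k1 \<in> subterms m''" and wy: "wfm i y1"
        and yy: "y = decd i b y1" and kk: "k' = sw b k1"
        using subterms_decd_Sig by blast
      have "Sig x k = Sig (MPair (Atom i) y1) k1"
        using x k yy kk enc_decd[OF wy] by simp
      then show ?thesis using s1 rm inh by fastforce
    qed
  qed
qed

end



declare run.simps(2)[simp del]

lemma sendM_eq: "h \<noteq> [] \<Longrightarrow> sendM N T sendB decB n h =
     (let i = (length h - 1) div T + 1; b = bcast N T decB n h i in
      map (\<lambda>(j, m). (sw b j, enc i b m)) (sendB (sw b n) (bbview N i b n (drop ((i - 1) * T) h))))"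
  by (simp add: sendM_def)

lemma sw_Suc0[simp]: "sw b (Suc 0) = b"
  by (simp add: sw_def)

lemma marked_proc_honest: "marked_proc N C dec r h = Some m \<Longrightarrow> m \<in> honest N C"
proof -
  assume a: "marked_proc N C dec r h = Some m"
  show ?thesis
  proof (cases "r = 1")
    case True then show ?thesis using a by (simp add: marked_proc_def split: if_splits)
  next
    case False
    then have ex: "\<exists>!n. n \<in> honest N C \<and> dec n (h n) \<noteq> Unmarked"
      and m: "m = (THE n. n \<in> honest N C \<and> dec n (h n) \<noteq> Unmarked)"
      using a by (auto simp: marked_proc_def split: if_splits)
    show ?thesis using theI'[OF ex] m by simp
  qed
qed

lemma sw_bb[simp]: "sw b b = 1"
  by (simp add: sw_def)

lemma sw_mem_image: "q \<in> sw b ` A \<longleftrightarrow> sw b q \<in> A"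
  by (metis image_iff sw_sw)

lemma map_dec_enc: "map (\<lambda>(j, m). (sw b j, decd i b m)) (map (\<lambda>(j, m). (sw b j, enc i b m)) X) = X"
  by (induction X) auto

lemma div_base: "s' < (T::nat) \<Longrightarrow> ((i - 1) * T + s') div T = i - 1"
  by (metis add.commute add.right_neutral div_less div_mult_self3 gr_implies_not0 less_nat_zero_code)

context
  fixes N T :: nat and sendB :: sendfn and decB :: "nat \<Rightarrow> hist \<Rightarrow> nat"
    and f mc sc K :: nat and V :: "nat set" and I :: "nat \<Rightarrow> nat" and C :: "nat set" and adv :: advfn
  assumes BB: "solves_BB N f V T mc sc sendB decB"
    and T0: "0 < T" and N1: "1 \<le> N" and V1: "{1..N} \<subseteq> V" and V0: "0 \<in> V"
    and Irange: "\<forall>i\<in>{1..K}. I i \<in> {1..N}"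
    and fadv: "f_adversary N f C (sendM N T sendB decB) adv (marker_input N C (decM N T decB) T K I)"
begin

abbreviation "SM \<equiv> sendM N T sendB decB"
abbreviation "DM \<equiv> decM N T decB"
abbreviation "INP \<equiv> marker_input N C DM T K I"
abbreviation "RR t \<equiv> fst (run N C SM adv INP t)"
abbreviation "OUT t \<equiv> snd (run N C SM adv INP t)"
abbreviation "HH \<equiv> honest N C"

lemma CN: "C \<subseteq> {1..N}" and cardC: "card C \<le> f" and adm: "admissible_adv N C SM adv INP"
  using fadv by (auto simp: f_adversary_def)

lemma adv_all: assumes "(j, m) \<in> set (adv t c)" "c \<in> C"
  shows "j \<in> {1..N} \<and> (\<forall>x k. Sig x k \<in> subterms m \<longrightarrow>
           k \<in> C \<or> (\<exists>c' \<in> C. \<exists>r \<in> set (hists_at N C SM adv INP (Suc t) c').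
                      \<exists>(i, m') \<in> set (Product_Type.snd r). Sig x k \<in> subterms m'))"
proof -
  have "\<forall>(j, m) \<in> set (adv t c). j \<in> {1..N} \<and> (\<forall>x k. Sig x k \<in> subterms m \<longrightarrow>
           k \<in> C \<or> (\<exists>c' \<in> C. \<exists>r \<in> set (hists_at N C SM adv INP (Suc t) c').
                      \<exists>(i, m') \<in> set (Product_Type.snd r). Sig x k \<in> subterms m'))"
    using adm assms(2) unfolding admissible_adv_def by blast
  from bspec[OF this assms(1)] show ?thesis by simp
qed

lemma adv_dest: "(j, m) \<in> set (adv t c) \<Longrightarrow> c \<in> C \<Longrightarrow> j \<in> {1..N}"
  using adv_all by blast

lemma adv_prop: "(j, m) \<in> set (adv t c) \<Longrightarrow> c \<in> C \<Longrightarrow> Sig x k \<in> subterms m \<Longrightarrow>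
   k \<in> C \<or> (\<exists>c'\<in>C. \<exists>r0\<le>t. \<exists>q m'. (q, m') \<in> set (deliver N (OUT r0) c') \<and> Sig x k \<in> subterms m')"
proof -
  assume a: "(j, m) \<in> set (adv t c)" "c \<in> C" "Sig x k \<in> subterms m"
  then have "k \<in> C \<or> (\<exists>c' \<in> C. \<exists>r \<in> set (hists_at N C SM adv INP (Suc t) c').
                      \<exists>(i, m') \<in> set (Product_Type.snd r). Sig x k \<in> subterms m')"
    using adv_all by blast
  then show ?thesis
  proof
    assume "\<exists>c' \<in> C. \<exists>r \<in> set (hists_at N C SM adv INP (Suc t) c').
                      \<exists>(i, m') \<in> set (Product_Type.snd r). Sig x k \<in> subterms m'"
    then obtain c' r q m' where c': "c' \<in> C" and r: "r \<in> set (RR (Suc t) c')"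
      and qm: "(q, m') \<in> set (snd r)" and s: "Sig x k \<in> subterms m'"
      by (auto simp: hists_at_def)
    from r obtain r0 where "r0 < Suc t" "r = (INP r0 (RR r0) c', deliver N (OUT r0) c')"
      by (auto simp: set_run)
    then have "r0 \<le> t" "(q, m') \<in> set (deliver N (OUT r0) c')" using qm by auto
    with s c' show ?thesis by blast
  qed simp
qed

lemma honest_not_C: "n \<in> HH \<Longrightarrow> n \<notin> C" and honest_N: "n \<in> HH \<Longrightarrow> n \<in> {1..N}"
  by (auto simp: honest_def)

lemma tagB: "n \<in> {1..N} \<Longrightarrow> (j, m) \<in> set (OUT (Suc s) n) \<Longrightarrow>
   Sig (MPair (Atom j') y) k0 \<in> subterms m \<Longrightarrow> k0 \<notin> C \<Longrightarrow> j' \<le> s div T + 1"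
proof (induction s arbitrary: n j m j' y k0 rule: less_induct)
  case (less s)
  show ?case
  proof (cases "n \<in> C")
    case True
    then have jm: "(j, m) \<in> set (adv s n)" using less.prems(2) by (simp add: run_snd_Suc)
    from adv_prop[OF jm True less.prems(3)] less.prems(4)
    obtain c' r0 q m' where c': "c' \<in> C" and r0: "r0 \<le> s" and qm: "(q, m') \<in> set (deliver N (OUT r0) c')"
      and sg: "Sig (MPair (Atom j') y) k0 \<in> subterms m'" by blast
    show ?thesis
    proof (cases r0)
      case 0 then show ?thesis using qm by simp
    next
      case (Suc s')
      with qm have "q \<in> {1..N}" "(c', m') \<in> set (OUT (Suc s') q)" using deliver_mem by auto
      from less.IH[OF _ this sg less.prems(4)] Suc r0 have "j' \<le> s' div T + 1" by simp
      moreover have "s' div T \<le> s div T" using Suc r0 by (simp add: div_le_mono)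
      ultimately show ?thesis by simp
    qed
  next
    case False
    let ?h = "RR (Suc s) n"
    have "(j, m) \<in> set (SM n ?h)" using less.prems(2) False by (simp add: run_snd_Suc)
    then obtain j0 m0 where "m = enc (s div T + 1) (bcast N T decB n ?h (s div T + 1)) m0"
      by (auto simp: sendM_def Let_def split: if_splits)
    with less.prems(3) show ?thesis using subterms_enc_Sig by fastforce
  qed
qed

context
  fixes i b :: nat
  assumes i1: "1 \<le> i" and bN: "b \<in> {1..N}"
    and hb: "\<forall>n\<in>HH. bcast N T decB n (RR ((i - 1) * T) n) i = b"
begin

abbreviation "base \<equiv> (i - 1) * T"
abbreviation "CB \<equiv> sw b ` C"
abbreviation "advB \<equiv> (\<lambda>s c. if s < T then map (\<lambda>(j, m). (sw b j, decd i b m)) (adv (base + s) (sw b c)) else [])"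
abbreviation "vB \<equiv> (case INP base (RR base) b of Some x \<Rightarrow> x | None \<Rightarrow> 0)"
abbreviation "RB t \<equiv> fst (run N CB sendB advB (bb_input vB) t)"
abbreviation "OB t \<equiv> snd (run N CB sendB advB (bb_input vB) t)"

lemma bcast_honest: "n \<in> HH \<Longrightarrow> base \<le> t \<Longrightarrow> bcast N T decB n (RR t n) i = b"
  using hb bcast_take[of N T decB n "RR t n" i] take_run[of base t] by simp

lemma honest_out: "n \<in> HH \<Longrightarrow> s' < T \<Longrightarrow> OUT (Suc (base + s')) n =
   map (\<lambda>(j, m). (sw b j, enc i b m)) (sendB (sw b n) (bbview N i b n (drop base (RR (Suc (base + s')) n))))"
proof -
  assume n: "n \<in> HH" and s: "s' < T"
  have ii: "(length (RR (Suc (base + s')) n) - 1) div T + 1 = i"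
    using div_base[OF s, of i] i1 by simp
  have bb: "bcast N T decB n (RR (Suc (base + s')) n) i = b"
    by (rule bcast_honest[OF n]) simp
  have "OUT (Suc (base + s')) n = SM n (RR (Suc (base + s')) n)"
    using honest_not_C[OF n] by (simp add: run_snd_Suc)
  also have "\<dots> = map (\<lambda>(j, m). (sw b j, enc i b m)) (sendB (sw b n) (bbview N i b n (drop base (RR (Suc (base + s')) n))))"
  proof -
    have ne: "RR (Suc (base + s')) n \<noteq> []"
      by (metis length_run list.size(3) nat.distinct(1))
    show ?thesis unfolding sendM_eq[OF ne] Let_def using ii bb by simp
  qed
  finally show ?thesis .
qed

lemma outB: assumes s: "s' < T"
    and IH: "\<forall>p. sw b p \<in> HH \<longrightarrow> RB (Suc s') p = bbview N i b (sw b p) (drop base (RR (base + Suc s') (sw b p)))"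
    and q: "q \<in> {1..N}"
  shows "OB (Suc s') q = map (\<lambda>(j, m). (sw b j, decd i b m)) (OUT (base + Suc s') (sw b q))"
proof (cases "sw b q \<in> C")
  case True
  then have "q \<in> CB" by (simp add: sw_mem_image)
  then show ?thesis using True s by (simp add: run_snd_Suc)
next
  case False
  then have qC: "q \<notin> CB" by (simp add: sw_mem_image)
  have h: "sw b q \<in> HH" using False sw_range[OF bN q] by (simp add: honest_def)
  have "OB (Suc s') q = sendB q (RB (Suc s') q)" using qC by (simp add: run_snd_Suc)
  also have "\<dots> = sendB q (bbview N i b (sw b q) (drop base (RR (base + Suc s') (sw b q))))"
    using IH h by simp
  also have "\<dots> = map (\<lambda>(j, m). (sw b j, decd i b m)) (OUT (base + Suc s') (sw b q))"
  proof -
    have eq: "OUT (base + Suc s') (sw b q) = map (\<lambda>(j, m). (sw b j, enc i b m))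
       (sendB q (bbview N i b (sw b q) (drop base (RR (base + Suc s') (sw b q)))))"
      using honest_out[OF h s] by simp
    show ?thesis unfolding eq map_dec_enc by (rule refl)
  qed
  finally show ?thesis .
qed

lemma drop_snoc: "length xs \<ge> k \<Longrightarrow> drop k (xs @ [x]) = drop k xs @ [x]"
  by simp

lemma SIM: "s \<le> T \<Longrightarrow> RB s p = bbview N i b (sw b p) (drop base (RR (base + s) (sw b p)))"
proof (induction s arbitrary: p)
  case 0
  then show ?case by simp
next
  case (Suc s)
  let ?n = "sw b p"
  have IH: "\<forall>p. RB s p = bbview N i b (sw b p) (drop base (RR (base + s) (sw b p)))"
    using Suc by simp
  have e1: "RB (Suc s) p = RB s p @ [(bb_input vB s (RB s) p, deliver N (OB s) p)]"
    by (rule run_Suc_app)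
  have e2: "RR (base + Suc s) ?n = RR (base + s) ?n @ [(INP (base + s) (RR (base + s)) ?n, deliver N (OUT (base + s)) ?n)]"
    using run_Suc_app[of N C SM adv INP "base + s" ?n] by simp
  have e3: "drop base (RR (base + Suc s) ?n) = drop base (RR (base + s) ?n) @ [(INP (base + s) (RR (base + s)) ?n, deliver N (OUT (base + s)) ?n)]"
    unfolding e2 by (rule drop_snoc) simp
  have e4: "(drop base (RR (base + s) ?n) = []) = (s = 0)" by simp
  have inp: "bb_input vB s (RB s) p = (if s = 0 \<and> ?n = b then Some (case INP (base + s) (RR (base + s)) ?n of Some x \<Rightarrow> x | None \<Rightarrow> 0) else None)"
    by (auto simp: bb_input_def sw_eq_conv)
  have dl: "deliver N (OB s) p = (if s = 0 then [] else reord N i b (deliver N (OUT (base + s)) ?n))"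
  proof (cases s)
    case 0 then show ?thesis by simp
  next
    case (Suc s')
    have "\<forall>q\<in>{1..N}. OB (Suc s') q = map (\<lambda>(j, m). (sw b j, decd i b m)) (OUT (base + Suc s') (sw b q))"
      using outB[of s'] IH Suc \<open>Suc s \<le> T\<close> by simp
    then have "deliver N (OB (Suc s')) p = reord N i b (deliver N (OUT (base + Suc s')) (sw b p))"
      by (rule deliver_relabel[OF bN])
    then show ?thesis using Suc by simp
  qed
  show ?case
    unfolding e1 inp dl e3 bbview_snoc e4 IH[rule_format, of p]
    by (simp add: decode_rec_def)
qed

lemma iT: "i * T = base + T"
  using i1 by (cases i) auto

lemma expose: "r0 \<le> base + T \<Longrightarrow> c \<in> C \<Longrightarrow> (q, m) \<in> set (deliver N (OUT r0) c) \<Longrightarrow>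
   Sig (MPair (Atom i) y) k0 \<in> subterms m \<Longrightarrow> k0 \<notin> C \<Longrightarrow>
   \<exists>r0'. base < r0' \<and> r0' \<le> r0 \<and> (\<exists>c'\<in>C. \<exists>q' m'. (q', m') \<in> set (deliver N (OUT r0') c') \<and>
      Sig (decd i b y) (sw b k0) \<in> subterms (decd i b m'))"
proof (induction r0 arbitrary: c q m rule: less_induct)
  case (less r0)
  show ?case
  proof (cases r0)
    case 0 then show ?thesis using less.prems(3) by simp
  next
    case (Suc s)
    from less.prems(3) Suc have q: "q \<in> {1..N}" and cm: "(c, m) \<in> set (OUT (Suc s) q)"
      using deliver_mem by auto
    have "i \<le> s div T + 1" using tagB[OF q cm less.prems(4) less.prems(5)] .
    then have "base \<le> s"
      using T0 by (metis add_diff_cancel_right' diff_le_mono less_mult_imp_div_less not_le)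
    then obtain s' where s': "s = base + s'" by (metis le_add_diff_inverse)
    have s'T: "s' < T" using less.prems(1) Suc s' by simp
    show ?thesis
    proof (cases "q \<in> C")
      case True
      then have "(c, m) \<in> set (adv s q)" using cm by (simp add: run_snd_Suc)
      from adv_prop[OF this True less.prems(4)] less.prems(5)
      obtain c'' r1 q'' m'' where c'': "c'' \<in> C" and r1: "r1 \<le> s"
        and qm: "(q'', m'') \<in> set (deliver N (OUT r1) c'')"
        and sg: "Sig (MPair (Atom i) y) k0 \<in> subterms m''" by blast
      have "r1 < r0" "r1 \<le> base + T" using r1 Suc less.prems(1) by auto
      from less.IH[OF this c'' qm sg less.prems(5)] obtain r0' c' q' m' where
        A: "base < r0'" "r0' \<le> r1" "c' \<in> C" "(q', m') \<in> set (deliver N (OUT r0') c')"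
           "Sig (decd i b y) (sw b k0) \<in> subterms (decd i b m')" by blast
      have "r0' \<le> r0" using A r1 Suc by simp
      then show ?thesis using A by blast
    next
      case False
      then have h: "q \<in> HH" using q by (simp add: honest_def)
      from cm honest_out[OF h s'T] s' obtain m0 where m: "m = enc i b m0"
        by auto
      have "Sig (decd i b y) (sw b k0) \<in> subterms (decd i b m)"
        using Sig_in_subterms_decd less.prems(4) m by simp
      moreover have "base < r0" using Suc s' by simp
      ultimately show ?thesis using less.prems(3,2) by blast
    qed
  qed
qed

lemma length_bbview[simp]: "length (bbview N i' b' n hs) = length hs"
  by (simp add: bbview_def)

lemma nth_bbview: "j < length hs \<Longrightarrow> bbview N i' b' n hs ! j = decode_rec N i' b' n (j = 0) (hs ! j)"
  by (simp add: bbview_def)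

lemma admB: "admissible_adv N CB sendB advB (bb_input vB)"
  unfolding admissible_adv_def
proof (intro allI ballI)
  fix t c x
  assume c: "c \<in> CB" and x: "x \<in> set (advB t c)"
  obtain j m where xjm: "x = (j, m)" by (cases x)
  have jm: "(j, m) \<in> set (advB t c)" using x xjm by simp
  then have t: "t < T" by (auto split: if_splits)
  from jm t obtain j0 m0 where jm0: "(j0, m0) \<in> set (adv (base + t) (sw b c))"
    and j: "j = sw b j0" and m: "m = decd i b m0" by auto
  have sc: "sw b c \<in> C" using c by (simp add: sw_mem_image)
  show "case x of (j, m) \<Rightarrow> j \<in> {1..N} \<and> (\<forall>x k. Sig x k \<in> subterms m \<longrightarrow> k \<in> CB \<or>
     (\<exists>c'\<in>CB. \<exists>r\<in>set (hists_at N CB sendB advB (bb_input vB) (Suc t) c').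
        \<exists>(i, m')\<in>set (snd r). Sig x k \<in> subterms m'))"
    unfolding xjm prod.case
  proof (intro conjI allI impI)
    show "j \<in> {1..N}" using adv_dest[OF jm0 sc] j sw_range[OF bN] by simp
  next
    fix x k assume "Sig x k \<in> subterms m"
    then obtain y k0 where sy: "Sig (MPair (Atom i) y) k0 \<in> subterms m0" and x: "x = decd i b y"
      and k: "k = sw b k0" using subterms_decd_Sig m by blast
    show "k \<in> CB \<or> (\<exists>c'\<in>CB. \<exists>r\<in>set (hists_at N CB sendB advB (bb_input vB) (Suc t) c').
        \<exists>(i, m')\<in>set (snd r). Sig x k \<in> subterms m')"
    proof (cases "k0 \<in> C")
      case True then show ?thesis using k by (simp add: sw_mem_image)
    next
      case False
      from adv_prop[OF jm0 sc sy] False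
      obtain c'' r1 q'' m'' where c'': "c'' \<in> C" and r1: "r1 \<le> base + t"
        and qm: "(q'', m'') \<in> set (deliver N (OUT r1) c'')"
        and sg: "Sig (MPair (Atom i) y) k0 \<in> subterms m''" by blast
      have "r1 \<le> base + T" using r1 t by simp
      from expose[OF this c'' qm sg False] obtain r0' c' q' m' where
        r0': "base < r0'" "r0' \<le> r1" and c': "c' \<in> C" and qm': "(q', m') \<in> set (deliver N (OUT r0') c')"
        and sg': "Sig x k \<in> subterms (decd i b m')" using x k by blast
      define jj where "jj = r0' - base"
      have jj: "0 < jj" "jj < Suc t" "r0' = base + jj" using r0' r1 by (auto simp: jj_def)
      let ?hs = "drop base (RR (base + Suc t) c')"
      have hs: "hists_at N CB sendB advB (bb_input vB) (Suc t) (sw b c') = bbview N i b c' ?hs"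
        unfolding hists_at_def using SIM[of "Suc t" "sw b c'"] t by simp
      have len: "jj < length ?hs" using jj by simp
      have "?hs ! jj = RR (base + Suc t) c' ! r0'" using jj by simp
      also have "\<dots> = (INP r0' (RR r0') c', deliver N (OUT r0') c')"
        using jj by (simp add: nth_run)
      finally have hsj: "?hs ! jj = (INP r0' (RR r0') c', deliver N (OUT r0') c')" .
      let ?r = "bbview N i b c' ?hs ! jj"
      have rin: "?r \<in> set (bbview N i b c' ?hs)" using len by simp
      have "snd ?r = reord N i b (deliver N (OUT r0') c')"
        using len jj hsj by (simp add: nth_bbview decode_rec_def)
      then have "(sw b q', decd i b m') \<in> set (snd ?r)" using reord_mem[OF qm' bN] by simp
      then have "\<exists>r\<in>set (hists_at N CB sendB advB (bb_input vB) (Suc t) (sw b c')).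
        \<exists>(i, m')\<in>set (snd r). Sig x k \<in> subterms m'"
        using rin sg' unfolding hs by blast
      moreover have "sw b c' \<in> CB" using c' by (simp add: sw_mem_image)
      ultimately show ?thesis by blast
    qed
  qed
qed

lemma fadvB: "f_adversary N f CB sendB advB (bb_input vB)"
proof -
  have "CB \<subseteq> {1..N}" using CN sw_range[OF bN] by auto
  moreover have "card CB \<le> f" using cardC card_image[of "sw b" C] inj_sw by (simp add: inj_on_def)
  ultimately show ?thesis using admB by (simp add: f_adversary_def)
qed

lemma vB_V: "vB \<in> V"
proof (cases "INP base (RR base) b")
  case None then show ?thesis using V0 by simp
next
  case (Some x)
  then have "base div T < K" "x = I (base div T + 1)"
    by (auto simp: marker_input_def split: if_splits)
  moreover have "base div T + 1 = i" using T0 i1 by simp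
  ultimately have "x \<in> {1..N}" using Irange by auto
  then show ?thesis using Some V1 by auto
qed

lemma HB: "honest N CB = sw b ` HH"
proof -
  have "sw b ` HH = sw b ` {1..N} - sw b ` C"
    unfolding honest_def by (rule image_set_diff[OF inj_sw])
  then show ?thesis using sw_image[OF bN] by (simp add: honest_def)
qed

lemma BBres:
  "(\<forall>p\<in>honest N CB. decB p (RB T p) \<in> V) \<and>
   (\<forall>p\<in>honest N CB. \<forall>p'\<in>honest N CB. decB p (RB T p) = decB p' (RB T p')) \<and>
   (1 \<in> honest N CB \<longrightarrow> (\<forall>p\<in>honest N CB. decB p (RB T p) = vB)) \<and>
   (\<forall>t. (\<Sum>s<t. msgs_at N CB sendB advB (bb_input vB) s) \<le> mc) \<and>
   (\<forall>t. (\<Sum>s<t. sigs_at N CB sendB advB (bb_input vB) s) \<le> sc)"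
  using BB vB_V fadvB unfolding solves_BB_def Let_def hists_at_def by blast

lemma rdec_sim: "n \<in> HH \<Longrightarrow> rdec N T decB n (RR (i * T) n) i = decB (sw b n) (RB T (sw b n))"
proof -
  assume n: "n \<in> HH"
  have bb: "bcast N T decB n (RR (i * T) n) i = b" using bcast_honest[OF n] iT by simp
  have w: "window T i (RR (i * T) n) = drop base (RR (base + T) n)"
    using iT by (simp add: window_def)
  show ?thesis unfolding rdec_def bb w using SIM[of T "sw b n"] by simp
qed

lemma sent_sim: "n \<in> HH \<Longrightarrow> s < T \<Longrightarrow> sent_at N C SM adv INP (base + s) n =
   map (\<lambda>(j, m). (sw b j, enc i b m)) (sent_at N CB sendB advB (bb_input vB) s (sw b n))"
proof -
  assume n: "n \<in> HH" and s: "s < T"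
  have nB: "sw b n \<notin> CB" using honest_not_C[OF n] by (simp add: sw_mem_image)
  have "sent_at N CB sendB advB (bb_input vB) s (sw b n) = sendB (sw b n) (RB (Suc s) (sw b n))"
    using nB by (simp add: sent_at_def run_snd_Suc)
  also have "\<dots> = sendB (sw b n) (bbview N i b n (drop base (RR (Suc (base + s)) n)))"
    using SIM[of "Suc s" "sw b n"] s by simp
  finally have calc: "sent_at N CB sendB advB (bb_input vB) s (sw b n) = sendB (sw b n) (bbview N i b n (drop base (RR (Suc (base + s)) n)))" .
  have e: "sent_at N C SM adv INP (base + s) n = OUT (Suc (base + s)) n" unfolding sent_at_def ..
  show ?thesis unfolding e honest_out[OF n s] calc ..
qed

lemma sum_shift: "(\<Sum>s\<in>{a..<a + (t::nat)}. g s) = (\<Sum>s<t. g (a + s))"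
  by (induction t) (auto simp: lessThan_Suc add.commute)

lemma msgs_sim: "s < T \<Longrightarrow> msgs_at N C SM adv INP (base + s) = msgs_at N CB sendB advB (bb_input vB) s"
proof -
  assume s: "s < T"
  have "msgs_at N CB sendB advB (bb_input vB) s =
     (\<Sum>p \<in> sw b ` HH. length (sent_at N CB sendB advB (bb_input vB) s p))"
    by (simp add: msgs_at_def HB)
  also have "\<dots> = (\<Sum>n \<in> HH. length (sent_at N CB sendB advB (bb_input vB) s (sw b n)))"
    by (rule sum.reindex_cong[where l="sw b"]) (auto simp: inj_on_def)
  also have "\<dots> = (\<Sum>n \<in> HH. length (sent_at N C SM adv INP (base + s) n))"
    by (rule sum.cong[OF refl]) (simp only: sent_sim[OF _ s] length_map)
  finally show ?thesis by (simp add: msgs_at_def)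
qed

lemma sigsum_map: "sum_list (map (\<lambda>(j, m). sigcount m) (map (\<lambda>(j, m). (sw b j, enc i b m)) X)) =
   sum_list (map (\<lambda>(j, m). sigcount m) X)"
  by (induction X) auto

lemma sigs_sim: "s < T \<Longrightarrow> sigs_at N C SM adv INP (base + s) = sigs_at N CB sendB advB (bb_input vB) s"
proof -
  assume s: "s < T"
  have "sigs_at N CB sendB advB (bb_input vB) s =
     (\<Sum>p \<in> sw b ` HH. sum_list (map (\<lambda>(j, m). sigcount m) (sent_at N CB sendB advB (bb_input vB) s p)))"
    by (simp add: sigs_at_def HB)
  also have "\<dots> = (\<Sum>n \<in> HH. sum_list (map (\<lambda>(j, m). sigcount m) (sent_at N CB sendB advB (bb_input vB) s (sw b n))))"
    by (rule sum.reindex_cong[where l="sw b"]) (auto simp: inj_on_def)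
  also have "\<dots> = (\<Sum>n \<in> HH. sum_list (map (\<lambda>(j, m). sigcount m) (sent_at N C SM adv INP (base + s) n)))"
    by (rule sum.cong[OF refl]) (simp only: sent_sim[OF _ s] sigsum_map)
  finally show ?thesis by (simp add: sigs_at_def)
qed

lemma cost_round:
  "(\<Sum>s\<in>{(i - 1) * T..<i * T}. msgs_at N C SM adv INP s) \<le> mc \<and>
   (\<Sum>s\<in>{(i - 1) * T..<i * T}. sigs_at N C SM adv INP s) \<le> sc"
proof -
  have "(\<Sum>s\<in>{(i - 1) * T..<i * T}. msgs_at N C SM adv INP s) = (\<Sum>s<T. msgs_at N CB sendB advB (bb_input vB) s)"
    unfolding iT sum_shift by (rule sum.cong[OF refl]) (rule msgs_sim, simp)
  moreover have "(\<Sum>s\<in>{(i - 1) * T..<i * T}. sigs_at N C SM adv INP s) = (\<Sum>s<T. sigs_at N CB sendB advB (bb_input vB) s)"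
    unfolding iT sum_shift by (rule sum.cong[OF refl]) (rule sigs_sim, simp)
  moreover have "(\<Sum>s<T. msgs_at N CB sendB advB (bb_input vB) s) \<le> mc"
    using BBres by blast
  moreover have "(\<Sum>s<T. sigs_at N CB sendB advB (bb_input vB) s) \<le> sc"
    using BBres by blast
  ultimately show ?thesis by simp
qed

lemma rdec_cons: "n \<in> HH \<Longrightarrow> n' \<in> HH \<Longrightarrow>
    rdec N T decB n (RR (i * T) n) i = rdec N T decB n' (RR (i * T) n') i"
proof -
  assume n: "n \<in> HH" and n': "n' \<in> HH"
  have p: "sw b n \<in> honest N CB" "sw b n' \<in> honest N CB" using n n' HB by auto
  have cons: "\<forall>p\<in>honest N CB. \<forall>p'\<in>honest N CB. decB p (RB T p) = decB p' (RB T p')"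
    using BBres by blast
  show ?thesis unfolding rdec_sim[OF n] rdec_sim[OF n'] using cons p by blast
qed

lemma rdec_valid: "b \<in> HH \<Longrightarrow> n \<in> HH \<Longrightarrow> rdec N T decB n (RR (i * T) n) i = vB"
proof -
  assume b: "b \<in> HH" and n: "n \<in> HH"
  have "1 \<in> honest N CB" using b by (simp add: HB sw_mem_image)
  moreover have val: "1 \<in> honest N CB \<longrightarrow> (\<forall>p\<in>honest N CB. decB p (RB T p) = vB)"
    using BBres by blast
  moreover have p: "sw b n \<in> honest N CB" using n HB by auto
  ultimately show ?thesis unfolding rdec_sim[OF n] by blast
qed

lemma DM_eq: "n \<in> HH \<Longrightarrow> DM n (RR (i * T) n) =
   (if rdec N T decB n (RR (i * T) n) i = n then Marked (Some b) else Unmarked)"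
proof -
  assume n: "n \<in> HH"
  have l: "length (RR (i * T) n) div T = i" using T0 by simp
  have "bcast N T decB n (RR (i * T) n) i = b" using bcast_honest[OF n] iT by simp
  then show ?thesis using l i1 by (simp add: decM_def Let_def)
qed

lemma round_props:
  assumes iK: "i \<le> K" and hM: "\<forall>m. marked_proc N C DM i (RR base) = Some m \<longrightarrow> m = b"
  shows "(let h = hists_at N C SM adv INP (i * T);
               M = marked_proc N C DM i (hists_at N C SM adv INP ((i - 1) * T)) in
           (\<forall>n \<in> HH. \<forall>k. DM n (h n) = Marked (Some k) \<longrightarrow> k \<in> {1..N}) \<and>
           card {n \<in> HH. DM n (h n) \<noteq> Unmarked} \<le> 1 \<and>
           (\<forall>m. M = Some m \<and> I i \<in> HH \<longrightarrow> DM (I i) (h (I i)) = Marked (Some m)) \<and>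
           (M = None \<longrightarrow> (\<forall>n \<in> HH. \<forall>k. DM n (h n) = Marked (Some k) \<longrightarrow> k \<notin> HH)) \<and>
           (\<Sum>s \<in> {(i - 1) * T..<i * T}. msgs_at N C SM adv INP s) \<le> mc \<and>
           (\<Sum>s \<in> {(i - 1) * T..<i * T}. sigs_at N C SM adv INP s) \<le> sc)"
  unfolding Let_def hists_at_def
proof (intro conjI allI ballI impI)
  fix n k assume n: "n \<in> HH" and "DM n (RR (i * T) n) = Marked (Some k)"
  then show "k \<in> {1..N}" using DM_eq[OF n] bN by (simp split: if_splits)
next
  show "card {n \<in> HH. DM n (RR (i * T) n) \<noteq> Unmarked} \<le> 1"
  proof (cases "HH = {}")
    case True then show ?thesis by simp
  next
    case False
    then obtain n0 where n0: "n0 \<in> HH" by blast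
    have "{n \<in> HH. DM n (RR (i * T) n) \<noteq> Unmarked} \<subseteq> {rdec N T decB n0 (RR (i * T) n0) i}"
      using DM_eq rdec_cons[OF _ n0] by (auto split: if_splits)
    then have "card {n \<in> HH. DM n (RR (i * T) n) \<noteq> Unmarked} \<le> card {rdec N T decB n0 (RR (i * T) n0) i}"
      by (rule card_mono[rotated]) simp
    then show ?thesis by simp
  qed
next
  fix m assume a: "marked_proc N C DM i (RR base) = Some m \<and> I i \<in> HH"
  then have mb: "m = b" using hM by blast
  have bH: "b \<in> HH" using a mb marked_proc_honest by blast
  have "INP base (RR base) b = Some (I i)"
    using a mb T0 i1 iK by (simp add: marker_input_def)
  then have "vB = I i" by simp
  then have "rdec N T decB (I i) (RR (i * T) (I i)) i = I i" using rdec_valid[OF bH] a by simp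
  then show "DM (I i) (RR (i * T) (I i)) = Marked (Some m)" using DM_eq a mb by simp
next
  fix n k assume M: "marked_proc N C DM i (RR base) = None" and n: "n \<in> HH"
    and d: "DM n (RR (i * T) n) = Marked (Some k)"
  show "k \<notin> HH"
  proof
    assume kH: "k \<in> HH"
    have kb: "k = b" and r: "rdec N T decB n (RR (i * T) n) i = n"
      using d DM_eq[OF n] by (auto split: if_splits)
    have "INP base (RR base) b = None" using M i1 by (simp add: marker_input_def)
    then have "vB = 0" by simp
    then have "n = 0" using rdec_valid[OF _ n] kH kb r by simp
    then show False using n by (simp add: honest_def)
  qed
next
  show "(\<Sum>s \<in> {(i - 1) * T..<i * T}. msgs_at N C SM adv INP s) \<le> mc" using cost_round by blast
next
  show "(\<Sum>s \<in> {(i - 1) * T..<i * T}. sigs_at N C SM adv INP s) \<le> sc" using cost_round by blast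
qed

lemma marked_proc_D: "marked_proc N C DM (Suc i) (RR (i * T)) = Some m \<Longrightarrow>
    m \<in> HH \<and> DM m (RR (i * T) m) \<noteq> Unmarked"
proof -
  assume a: "marked_proc N C DM (Suc i) (RR (i * T)) = Some m"
  then have ex: "\<exists>!n. n \<in> HH \<and> DM n (RR (i * T) n) \<noteq> Unmarked"
    and m: "m = (THE n. n \<in> HH \<and> DM n (RR (i * T) n) \<noteq> Unmarked)"
    using i1 by (auto simp: marked_proc_def split: if_splits)
  show ?thesis using theI'[OF ex] m by simp
qed

lemma next_inv: "\<exists>b'\<in>{1..N}. (\<forall>n\<in>HH. bcast N T decB n (RR (i * T) n) (Suc i) = b') \<and>
   (\<forall>m. marked_proc N C DM (Suc i) (RR (i * T)) = Some m \<longrightarrow> m = b')"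
proof (cases "HH = {}")
  case True
  show ?thesis
  proof (rule bexI[of _ 1])
    show "1 \<in> {1..N}" using N1 by simp
    show "(\<forall>n\<in>HH. bcast N T decB n (RR (i * T) n) (Suc i) = 1) \<and>
      (\<forall>m. marked_proc N C DM (Suc i) (RR (i * T)) = Some m \<longrightarrow> m = 1)"
      using True marked_proc_D by blast
  qed
next
  case False
  then obtain n0 where n0: "n0 \<in> HH" by blast
  define b' where "b' = bcast N T decB n0 (RR (i * T) n0) (Suc i)"
  have i0: "0 < i" using i1 by simp
  have all: "\<forall>n\<in>HH. bcast N T decB n (RR (i * T) n) (Suc i) = b'"
  proof
    fix n assume n: "n \<in> HH"
    show "bcast N T decB n (RR (i * T) n) (Suc i) = b'"
      unfolding b'_def bcast_Suc[OF i0] rdec_cons[OF n n0] ..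
  qed
  moreover have "\<forall>m. marked_proc N C DM (Suc i) (RR (i * T)) = Some m \<longrightarrow> m = b'"
  proof (intro allI impI)
    fix m assume "marked_proc N C DM (Suc i) (RR (i * T)) = Some m"
    from marked_proc_D[OF this] have mH: "m \<in> HH" and d: "DM m (RR (i * T) m) \<noteq> Unmarked" by auto
    have r: "rdec N T decB m (RR (i * T) m) i = m" using d DM_eq[OF mH] by (auto split: if_splits)
    have "m \<in> {1..N}" using mH by (simp add: honest_def)
    then have "bcast N T decB m (RR (i * T) m) (Suc i) = m" using bcast_Suc[OF i0] r by simp
    then show "m = b'" using all mH by simp
  qed
  moreover have "b' \<in> {1..N}" unfolding b'_def using bcast_range[OF N1] .
  ultimately show ?thesis by blast
qed

end

lemma inv: "1 \<le> i \<Longrightarrow> \<exists>b\<in>{1..N}. (\<forall>n\<in>HH. bcast N T decB n (RR ((i - 1) * T) n) i = b) \<and>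
   (\<forall>m. marked_proc N C DM i (RR ((i - 1) * T)) = Some m \<longrightarrow> m = b)"
proof (induction i)
  case 0 then show ?case by simp
next
  case (Suc i)
  show ?case
  proof (cases "i = 0")
    case True
    show ?thesis
    proof (rule bexI[of _ 1])
      show "1 \<in> {1..N}" using N1 by simp
      show "(\<forall>n\<in>HH. bcast N T decB n (RR ((Suc i - 1) * T) n) (Suc i) = 1) \<and>
        (\<forall>m. marked_proc N C DM (Suc i) (RR ((Suc i - 1) * T)) = Some m \<longrightarrow> m = 1)"
        using True by (simp add: marked_proc_def)
    qed
  next
    case False
    then have i1: "1 \<le> i" by simp
    from Suc.IH[OF i1] obtain b where bN: "b \<in> {1..N}"
      and hb: "\<forall>n\<in>HH. bcast N T decB n (RR ((i - 1) * T) n) i = b" by blast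
    from next_inv[OF i1 bN hb] show ?thesis by simp
  qed
qed

lemma marker_ok: "\<forall>i \<in> {1..K}.
          (let h = hists_at N C SM adv INP (i * T);
               M = marked_proc N C DM i (hists_at N C SM adv INP ((i - 1) * T)) in
           (\<forall>n \<in> HH. \<forall>k. DM n (h n) = Marked (Some k) \<longrightarrow> k \<in> {1..N}) \<and>
           card {n \<in> HH. DM n (h n) \<noteq> Unmarked} \<le> 1 \<and>
           (\<forall>m. M = Some m \<and> I i \<in> HH \<longrightarrow> DM (I i) (h (I i)) = Marked (Some m)) \<and>
           (M = None \<longrightarrow> (\<forall>n \<in> HH. \<forall>k. DM n (h n) = Marked (Some k) \<longrightarrow> k \<notin> HH)) \<and>
           (\<Sum>s \<in> {(i - 1) * T..<i * T}. msgs_at N C SM adv INP s) \<le> mc \<and>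
           (\<Sum>s \<in> {(i - 1) * T..<i * T}. sigs_at N C SM adv INP s) \<le> sc)"
proof
  fix i assume i: "i \<in> {1..K}"
  then have i1: "1 \<le> i" and iK: "i \<le> K" by auto
  from inv[OF i1] obtain b where bN: "b \<in> {1..N}"
    and hb: "\<forall>n\<in>HH. bcast N T decB n (RR ((i - 1) * T) n) i = b"
    and hM: "\<forall>m. marked_proc N C DM i (RR ((i - 1) * T)) = Some m \<longrightarrow> m = b" by blast
  show "(let h = hists_at N C SM adv INP (i * T);
               M = marked_proc N C DM i (hists_at N C SM adv INP ((i - 1) * T)) in
           (\<forall>n \<in> HH. \<forall>k. DM n (h n) = Marked (Some k) \<longrightarrow> k \<in> {1..N}) \<and>
           card {n \<in> HH. DM n (h n) \<noteq> Unmarked} \<le> 1 \<and>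
           (\<forall>m. M = Some m \<and> I i \<in> HH \<longrightarrow> DM (I i) (h (I i)) = Marked (Some m)) \<and>
           (M = None \<longrightarrow> (\<forall>n \<in> HH. \<forall>k. DM n (h n) = Marked (Some k) \<longrightarrow> k \<notin> HH)) \<and>
           (\<Sum>s \<in> {(i - 1) * T..<i * T}. msgs_at N C SM adv INP s) \<le> mc \<and>
           (\<Sum>s \<in> {(i - 1) * T..<i * T}. sigs_at N C SM adv INP s) \<le> sc)"
    by (rule round_props[OF i1 bN hb iK hM])
qed

end

lemma T0_impossible:
  assumes BB: "solves_BB N f V 0 mc sc sendB decB" and N1: "1 \<le> N" and V: "{1..N} \<subseteq> V" "0 \<in> V"
  shows False
proof -
  have fa: "f_adversary N f {} sendB adv inp" for adv inp
    by (simp add: f_adversary_def admissible_adv_def)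
  have H: "1 \<in> honest N {}" using N1 by (simp add: honest_def)
  have h0: "hists_at N {} sendB (\<lambda>t c. []) (bb_input v) 0 = (\<lambda>n. [])" for v
    by (simp add: hists_at_def)
  have "\<forall>v\<in>V. decB 1 [] = v"
  proof
    fix v assume v: "v \<in> V"
    note B2 = conjunct2[OF BB[unfolded solves_BB_def]]
    show "decB 1 [] = v"
      using mp[OF spec[OF spec[OF bspec[OF B2 v], of "{}"], of "\<lambda>t c. []"] fa] H
      unfolding Let_def h0 by blast
  qed
  moreover have "1 \<in> V" using V N1 by auto
  ultimately have "decB 1 [] = 1" "decB 1 [] = 0" using V by blast+
  then show False by simp
qed

theorem mainTheorem2:
  fixes N f T mc sc :: nat and V :: "nat set"
  assumes "finite V" and "0 \<in> V" and "{1..N} \<subseteq> V"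
    and "\<exists>sendf dec. solves_BB N f V T mc sc sendf dec"
  shows "\<forall>K. \<exists>sendf dec. solves_marker N f K T mc sc sendf dec"
proof
  fix K
  from assms(4) obtain sendB decB where BB: "solves_BB N f V T mc sc sendB decB" by blast
  show "\<exists>sendf dec. solves_marker N f K T mc sc sendf dec"
  proof (cases "N = 0")
    case True
    have "solves_marker N f K T mc sc (\<lambda>n h. []) (\<lambda>n h. Unmarked)"
      unfolding solves_marker_def valid_send_def using True
      by (auto simp: Let_def)
    then show ?thesis by blast
  next
    case False
    then have N1: "1 \<le> N" by simp
    have T0: "0 < T"
    proof (rule ccontr)
      assume "\<not> 0 < T"
      then have "T = 0" by simp
      then show False using T0_impossible[OF _ N1 assms(3) assms(2)] BB by blast
    qed
    have vs: "valid_send N sendB" using BB by (simp add: solves_BB_def)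
    have "solves_marker N f K T mc sc (sendM N T sendB decB) (decM N T decB)"
      unfolding solves_marker_def
    proof (intro conjI allI impI)
      show "valid_send N (sendM N T sendB decB)" by (rule valid_sendM[OF vs N1])
    next
      fix I C adv
      assume a: "(\<forall>i \<in> {1..K}. I i \<in> {1..N}) \<and>
         f_adversary N f C (sendM N T sendB decB) adv (marker_input N C (decM N T decB) T K I)"
      show "let H = honest N C; inp = marker_input N C (decM N T decB) T K I in
         \<forall>i \<in> {1..K}.
          (let h = hists_at N C (sendM N T sendB decB) adv inp (i * T);
               M = marked_proc N C (decM N T decB) i (hists_at N C (sendM N T sendB decB) adv inp ((i - 1) * T)) in
           (\<forall>n \<in> H. \<forall>k. decM N T decB n (h n) = Marked (Some k) \<longrightarrow> k \<in> {1..N}) \<and>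
           card {n \<in> H. decM N T decB n (h n) \<noteq> Unmarked} \<le> 1 \<and>
           (\<forall>m. M = Some m \<and> I i \<in> H \<longrightarrow> decM N T decB (I i) (h (I i)) = Marked (Some m)) \<and>
           (M = None \<longrightarrow> (\<forall>n \<in> H. \<forall>k. decM N T decB n (h n) = Marked (Some k) \<longrightarrow> k \<notin> H)) \<and>
           (\<Sum>s \<in> {(i - 1) * T..<i * T}. msgs_at N C (sendM N T sendB decB) adv inp s) \<le> mc \<and>
           (\<Sum>s \<in> {(i - 1) * T..<i * T}. sigs_at N C (sendM N T sendB decB) adv inp s) \<le> sc)"
        unfolding Let_def[of "honest N C"] Let_def[of "marker_input N C (decM N T decB) T K I"]
        using marker_ok[OF BB T0 N1 assms(3) assms(2)] a by blast
    qed
    then show ?thesis by blast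
  qed
qed

end
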